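(* Fix $p\in(0,1)$ and put $q=1-p$. Let $T_n$ be the completion time of the one-set clumsy coupon collector on $n$ types started from the empty collection. Then $pq^nT_n\Rightarrow\mathrm{Exp}(1)$ as $n\to\infty$.
   Context: One-set clumsy coupon collector: the state is $X(t)=(X_1(t),\dots,X_n(t))\in\{0,1\}^n$ ($X_i(t)=1$ meaning type $i$ is present), with $X(0)=(0,\dots,0)$. At each step one type $i$ is chosen uniformly from $[n]$, independently of the past, and $X_i$ is set to $1$ with probability $q$ and to $0$ with probability $p$ (independently); other coordinates are unchanged. $T_n=\inf\{t\ge0:X(t)=(1,\dots,1)\}$. $\mathrm{Exp}(1)$ is the exponential law with mean 1. *)

theory Defs
  imports "HOL-Probability.Probability"
begin

text \<open>One step of the one-set clumsy coupon collector on n types (types 0..n-1):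
  a type i chosen uniformly from {..<n} and an independent coin b which is True
  (set X_i := 1) with probability q and False (set X_i := 0) with probability p = 1-q.\<close>
definition clumsy_step :: "nat \<Rightarrow> real \<Rightarrow> (nat \<times> bool) pmf" where
  "clumsy_step n q = pair_pmf (pmf_of_set {..<n}) (bernoulli_pmf q)"

definition clumsy_space :: "nat \<Rightarrow> real \<Rightarrow> (nat \<Rightarrow> nat \<times> bool) measure" where
  "clumsy_space n q = PiM UNIV (\<lambda>_::nat. measure_pmf (clumsy_step n q))"

text \<open>State X(t), represented as the set of present types {i. X_i(t) = 1}; X(0) is empty.\<close>
fun clumsy_state :: "(nat \<Rightarrow> nat \<times> bool) \<Rightarrow> nat \<Rightarrow> nat set" where
  "clumsy_state \<omega> 0 = {}"
| "clumsy_state \<omega> (Suc t) =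
     (if snd (\<omega> t) then insert (fst (\<omega> t)) (clumsy_state \<omega> t)
      else clumsy_state \<omega> t - {fst (\<omega> t)})"

definition clumsy_T :: "nat \<Rightarrow> (nat \<Rightarrow> nat \<times> bool) \<Rightarrow> enat" where
  "clumsy_T n \<omega> = (if \<exists>t. clumsy_state \<omega> t = {..<n}
                     then enat (LEAST t. clumsy_state \<omega> t = {..<n}) else \<infinity>)"

end

theory Submission
  imports Defs "HOL-Real_Asymp.Real_Asymp"
begin

definition stp :: "nat set \<Rightarrow> nat \<times> bool \<Rightarrow> nat set" where
  "stp A x = (if snd x then insert (fst x) A else A - {fst x})"

fun st :: "nat set \<Rightarrow> (nat \<Rightarrow> nat \<times> bool) \<Rightarrow> nat \<Rightarrow> nat set" where
  "st A \<omega> 0 = A"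
| "st A \<omega> (Suc t) = stp (st A \<omega> t) (\<omega> t)"

lemma clumsy_state_st: "clumsy_state \<omega> t = st {} \<omega> t"
  by (induction t) (auto simp: stp_def)

lemma st_Suc_shift: "st A \<omega> (Suc t) = st (stp A (\<omega> 0)) (\<lambda>i. \<omega> (Suc i)) t"
  by (induction t) auto

lemma st_case_nat: "st A (case_nat x \<omega>) (Suc t) = st (stp A x) \<omega> t"
  by (subst st_Suc_shift) simp

definition Ev :: "nat \<Rightarrow> nat set \<Rightarrow> nat \<Rightarrow> (nat \<Rightarrow> nat \<times> bool) set" where
  "Ev n A t = {\<omega>. \<forall>s\<le>t. st A \<omega> s \<noteq> {..<n}}"

lemma space_clumsy: "space (clumsy_space n q) = UNIV"
  by (simp add: clumsy_space_def space_PiM PiE_UNIV_domain)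

lemma st_sets: "{\<omega>. st A \<omega> s \<in> B} \<in> sets (clumsy_space n q)"
proof (induction s arbitrary: B)
  case 0
  then show ?case
    using sets.top[of "clumsy_space n q"] sets.empty_sets[of "clumsy_space n q"]
    by (cases "A \<in> B") (auto simp: space_clumsy)
next
  case (Suc s)
  have coord: "{\<omega>. \<omega> s = x} \<in> sets (clumsy_space n q)" for x
  proof -
    have "(\<lambda>\<omega>. \<omega> s) \<in> measurable (clumsy_space n q) (measure_pmf (clumsy_step n q))"
      unfolding clumsy_space_def by (rule measurable_component_singleton) auto
    from measurable_sets[OF this, of "{x}"] show ?thesis by (simp add: space_clumsy vimage_def)
  qed
  have eq: "{\<omega>. st A \<omega> (Suc s) \<in> B} = (\<Union>x. {\<omega>. \<omega> s = x} \<inter> {\<omega>. st A \<omega> s \<in> {C. stp C x \<in> B}})"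
    by auto
  show ?case unfolding eq
    by (rule sets.countable_UN''; (rule sets.Int[OF coord Suc])?; simp)
qed

lemma Ev_sets: "Ev n A t \<in> sets (clumsy_space n q)"
proof -
  have "Ev n A t = (\<Inter>s\<in>{..t}. {\<omega>. st A \<omega> s \<in> - {{..<n}}})"
    by (auto simp: Ev_def)
  moreover have "{\<omega>. st A \<omega> s \<in> - {{..<n}}} \<in> sets (clumsy_space n q)" for s
    by (rule st_sets)
  ultimately show ?thesis by (auto intro!: sets.finite_INT)
qed

lemma Ev_case_nat: "case_nat x \<omega> \<in> Ev n A (Suc t) \<longleftrightarrow> A \<noteq> {..<n} \<and> \<omega> \<in> Ev n (stp A x) t"
proof -
  have "(\<forall>s\<le>Suc t. st A (case_nat x \<omega>) s \<noteq> {..<n}) \<longleftrightarrow>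
        st A (case_nat x \<omega>) 0 \<noteq> {..<n} \<and> (\<forall>s\<le>t. st A (case_nat x \<omega>) (Suc s) \<noteq> {..<n})"
    by (metis (no_types, lifting) Suc_le_mono le0 not0_implies_Suc)
  then show ?thesis unfolding Ev_def by (simp add: st_case_nat del: st.simps(2))
qed

lemma prob_space_clumsy: "prob_space (clumsy_space n q)"
  unfolding clumsy_space_def by (intro prob_space_PiM prob_space_measure_pmf)

lemma one_step:
  assumes "n \<ge> 1"
  shows "measure (clumsy_space n q) (Ev n A (Suc t)) =
    (if A = {..<n} then 0 else
      (\<Sum>x\<in>{..<n}\<times>UNIV. pmf (clumsy_step n q) x * measure (clumsy_space n q) (Ev n (stp A x) t)))"
proof -
  let ?M = "measure_pmf (clumsy_step n q)"
  let ?P = "clumsy_space n q"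
  interpret S: sequence_space ?M
    by (simp add: sequence_space_def product_prob_space_def product_sigma_finite_def
        prob_space_measure_pmf product_prob_space_axioms_def prob_space_imp_sigma_finite)
  interpret PS: pair_sigma_finite ?M S.S ..
  interpret PP: prob_space ?P by (rule prob_space_clumsy)
  have PS: "?P = S.S" by (simp add: clumsy_space_def)
  have E[measurable]: "Ev n A (Suc t) \<in> sets S.S" using Ev_sets[of n A "Suc t" q] by (simp add: PS)
  have sup: "set_pmf (clumsy_step n q) \<subseteq> {..<n} \<times> UNIV"
  proof -
    have "{..<n} \<noteq> ({}::nat set)" using assms by (auto simp: lessThan_empty_iff)
    then show ?thesis by (auto simp: clumsy_step_def)
  qed
  have "emeasure ?P (Ev n A (Suc t)) = (\<integral>\<^sup>+\<omega>. indicator (Ev n A (Suc t)) \<omega>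
      \<partial>(distr (?M \<Otimes>\<^sub>M S.S) S.S (\<lambda>(s, \<omega>). case_nat s \<omega>)))"
    by (simp add: PS S.PiM_iter)
  also have "\<dots> = (\<integral>\<^sup>+z. indicator (Ev n A (Suc t)) ((\<lambda>(s, \<omega>). case_nat s \<omega>) z) \<partial>(?M \<Otimes>\<^sub>M S.S))"
    by (rule nn_integral_distr) simp_all
  also have "\<dots> = (\<integral>\<^sup>+x. \<integral>\<^sup>+\<omega>. indicator (Ev n A (Suc t)) (case_nat x \<omega>) \<partial>S.S \<partial>?M)"
  proof -
    have m: "(\<lambda>z. indicator (Ev n A (Suc t)) ((\<lambda>(s, \<omega>). case_nat s \<omega>) z) :: ennreal) \<in> borel_measurable (?M \<Otimes>\<^sub>M S.S)"
      by measurable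
    show ?thesis using S.nn_integral_fst[OF m] by simp
  qed
  also have "\<dots> = (\<integral>\<^sup>+x. (if A = {..<n} then 0 else emeasure ?P (Ev n (stp A x) t)) \<partial>?M)"
  proof (rule nn_integral_cong)
    fix x
    have "(\<integral>\<^sup>+\<omega>. indicator (Ev n A (Suc t)) (case_nat x \<omega>) \<partial>S.S) =
          (\<integral>\<^sup>+\<omega>. (if A = {..<n} then 0 else indicator (Ev n (stp A x) t) \<omega>) \<partial>S.S)"
      by (intro nn_integral_cong) (auto simp: indicator_def Ev_case_nat)
    also have "\<dots> = (if A = {..<n} then 0 else emeasure ?P (Ev n (stp A x) t))"
      using Ev_sets[of n "stp A x" t q] by (simp add: PS)
    finally show "(\<integral>\<^sup>+\<omega>. indicator (Ev n A (Suc t)) (case_nat x \<omega>) \<partial>S.S) =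
          (if A = {..<n} then 0 else emeasure ?P (Ev n (stp A x) t))" .
  qed
  also have "\<dots> = (\<Sum>x\<in>{..<n}\<times>UNIV. (if A = {..<n} then 0 else emeasure ?P (Ev n (stp A x) t)) * pmf (clumsy_step n q) x)"
    using sup by (subst nn_integral_measure_pmf_support) auto
  also have "\<dots> = ennreal (if A = {..<n} then 0 else
      (\<Sum>x\<in>{..<n}\<times>UNIV. pmf (clumsy_step n q) x * measure (clumsy_space n q) (Ev n (stp A x) t)))"
    by (auto simp: PP.emeasure_eq_measure sum_ennreal[symmetric] ennreal_mult'' mult.commute
        intro!: sum.cong)
  finally show ?thesis
    by (simp add: PP.emeasure_eq_measure sum_nonneg)
qed

lemma pmf_clumsy_step:
  assumes "n \<ge> 1" "0 \<le> q" "q \<le> 1"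
  shows "pmf (clumsy_step n q) (i, b) = indicator {..<n} i / n * (if b then q else 1 - q)"
proof -
  have "{..<n} \<noteq> ({}::nat set)" using assms by (auto simp: lessThan_empty_iff)
  then show ?thesis using assms by (auto simp: clumsy_step_def pmf_pair)
qed

lemma lump:
  assumes "n \<ge> 1" "0 \<le> q" "q \<le> 1" "A \<subseteq> {..<n}"
  shows "(\<Sum>x\<in>{..<n}\<times>UNIV. pmf (clumsy_step n q) x * h (card (stp A x))) =
     real (card A) / n * (q * h (card A) + (1 - q) * h (card A - 1)) +
     (real n - real (card A)) / n * (q * h (card A + 1) + (1 - q) * h (card A))"
proof -
  have fA: "finite A" using assms(4) finite_subset by blast
  let ?g = "\<lambda>i. (q * h (card (insert i A)) + (1 - q) * h (card (A - {i}))) / n"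
  have "(\<Sum>x\<in>{..<n}\<times>UNIV. pmf (clumsy_step n q) x * h (card (stp A x))) =
        (\<Sum>i\<in>{..<n}. \<Sum>b\<in>UNIV. pmf (clumsy_step n q) (i, b) * h (card (stp A (i, b))))"
    by (simp add: sum.cartesian_product)
  also have "\<dots> = (\<Sum>i\<in>{..<n}. ?g i)"
    using assms by (intro sum.cong) (auto simp: UNIV_bool pmf_clumsy_step stp_def field_simps)
  also have "\<dots> = (\<Sum>i\<in>A. ?g i) + (\<Sum>i\<in>{..<n} - A. ?g i)"
    using assms(4) by (metis (no_types, lifting) add.commute finite_lessThan sum.subset_diff)
  also have "(\<Sum>i\<in>A. ?g i) = (\<Sum>i\<in>A. (q * h (card A) + (1 - q) * h (card A - 1)) / n)"
    using fA by (intro sum.cong) (auto simp: insert_absorb card_Diff_singleton)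
  also have "(\<Sum>i\<in>{..<n} - A. ?g i) = (\<Sum>i\<in>{..<n} - A. (q * h (card A + 1) + (1 - q) * h (card A)) / n)"
    using fA by (intro sum.cong) (auto simp: card_insert_if)
  also have "card ({..<n} - A) = n - card A"
    using assms(4) fA by (simp add: card_Diff_subset)
  moreover have "card A \<le> n" using assms(4) by (metis card_lessThan card_mono finite_lessThan)
  ultimately show ?thesis by (simp add: of_nat_diff)
qed


definition piB :: "nat \<Rightarrow> real \<Rightarrow> nat \<Rightarrow> real" where
  "piB n p j = real (n choose j) * (1 - p) ^ j * p ^ (n - j)"
definition Fc :: "nat \<Rightarrow> real \<Rightarrow> nat \<Rightarrow> real" where
  "Fc n p j = (\<Sum>l\<le>j. piB n p l)"
definition dd :: "nat \<Rightarrow> real \<Rightarrow> nat \<Rightarrow> real" where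
  "dd n p j = Fc n p j / (piB n p j * ((1 - p) * (real n - real j) / real n))"
definition mm :: "nat \<Rightarrow> real \<Rightarrow> nat \<Rightarrow> real" where
  "mm n p k = (\<Sum>j\<in>{k..<n}. dd n p j)"

lemma cancel_helper: "(a::real) \<noteq> 0 \<Longrightarrow> P \<noteq> 0 \<Longrightarrow> a * (F / (P * a)) = F / P"
  by simp

context
  fixes n :: nat and p :: real
  assumes p0: "0 < p" and p1: "p < 1" and n1: "1 \<le> n"
begin

lemma piB_pos: "j \<le> n \<Longrightarrow> piB n p j > 0"
  using p0 p1 by (simp add: piB_def)

lemma piB_nonneg: "piB n p j \<ge> 0"
  using p0 p1 by (simp add: piB_def)

lemma Fc_pos: "j \<le> n \<Longrightarrow> Fc n p j \<ge> piB n p j"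
  unfolding Fc_def
  by (rule member_le_sum) (auto intro: piB_nonneg)

lemma dd_pos: "j < n \<Longrightarrow> dd n p j > 0"
  unfolding dd_def using p0 p1 Fc_pos[of j] piB_pos[of j] n1
  by (intro divide_pos_pos mult_pos_pos) auto

lemma mm_Suc: "k < n \<Longrightarrow> mm n p k = dd n p k + mm n p (Suc k)"
  unfolding mm_def by (simp add: sum.atLeast_Suc_lessThan)

lemma mm_n: "mm n p n = 0"
  by (simp add: mm_def)

lemma mm_mono: "k \<le> k' \<Longrightarrow> mm n p k' \<le> mm n p k"
  unfolding mm_def
  by (rule sum_mono2) (auto intro: less_imp_le dd_pos)

lemma mm_pos: "k < n \<Longrightarrow> mm n p k > 0"
  using mm_Suc[of k] dd_pos[of k] mm_mono[of "Suc k" n] mm_n by simp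

lemma balance:
  assumes "1 \<le> k" "k < n"
  shows "(1 - p) * (real n - real k) / n * dd n p k - p * k / n * dd n p (k - 1) = 1"
proof -
  obtain j where k: "k = Suc j" using assms by (cases k) auto
  have bin: "real (n - j) * real (n choose j) = real (Suc j) * real (n choose Suc j)"
    using binomial_absorb_comp[of n j] binomial_absorption[of j n]
    by (metis of_nat_mult)
  have nj: "real (n - j) = real n - real j" using assms k by (simp add: of_nat_diff)
  have db: "piB n p j * ((1 - p) * (real n - real j) / n) = piB n p k * (p * k / n)"
  proof -
    have e: "n - j = Suc (n - k)" using assms k by simp
    have "piB n p j * ((1 - p) * (real n - real j) / n) =
          (real (n - j) * real (n choose j)) * ((1 - p) ^ Suc j * p ^ Suc (n - k) / n)"
      unfolding piB_def e nj[symmetric] by (simp add: field_simps)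
    also have "\<dots> = (real (Suc j) * real (n choose Suc j)) * ((1 - p) ^ Suc j * p ^ Suc (n - k) / n)"
      using bin by simp
    also have "\<dots> = piB n p k * (p * k / n)"
      unfolding piB_def k by (simp add: field_simps)
    finally show ?thesis .
  qed
  have Fk: "Fc n p k = Fc n p j + piB n p k" unfolding Fc_def k by simp
  have pk: "piB n p k > 0" "piB n p j > 0" using piB_pos assms k by auto
  have apos: "(1 - p) * (real n - real k) / n \<noteq> 0" using p1 assms by auto
  have X: "(1 - p) * (real n - real k) / n * dd n p k = Fc n p k / piB n p k"
    unfolding dd_def using pk apos by (intro cancel_helper) auto
  moreover have Y: "p * k / n * dd n p (k - 1) = Fc n p j / piB n p k"
  proof -
    have "dd n p (k - 1) = Fc n p j / (piB n p k * (p * k / n))"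
      unfolding dd_def using k db by simp
    then show ?thesis using pk p0 assms n1 by (simp add: field_simps)
  qed
  have "Fc n p k / piB n p k - Fc n p j / piB n p k = 1"
    using Fk pk by (simp add: diff_divide_distrib[symmetric])
  then show ?thesis by (simp only: X Y)
qed

lemma balance0: "(1 - p) * dd n p 0 = 1"
  unfolding dd_def Fc_def using piB_pos[of 0] p1 n1 by (simp add: field_simps)

lemma harmonic:
  assumes "k < n"
  shows "real k / n * ((1 - p) * mm n p k + (1 - (1 - p)) * mm n p (k - 1)) +
     (real n - real k) / n * ((1 - p) * mm n p (k + 1) + (1 - (1 - p)) * mm n p k) = mm n p k - 1"
proof (cases "k = 0")
  case True
  then show ?thesis using balance0 mm_Suc[of 0] assms n1 by (simp add: field_simps)
next
  case False
  have a: "mm n p (k - 1) = dd n p (k - 1) + mm n p k" using mm_Suc[of "k - 1"] False assms by simp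
  have b: "mm n p (k + 1) = mm n p k - dd n p k" using mm_Suc[of k] assms by simp
  show ?thesis using balance[of k] False assms n1 unfolding a b by (simp add: field_simps)
qed

end

context
  fixes n :: nat and p :: real
  assumes p0: "0 < p" and p1: "p < 1" and n1: "1 \<le> n"
begin

abbreviation "PP \<equiv> clumsy_space n (1 - p)"

lemma mm_ge1: "k < n \<Longrightarrow> mm n p k \<ge> 1"
proof -
  assume k: "k < n"
  have nn: "mm n p j \<ge> 0" for j
  proof (cases "j < n")
    case True then show ?thesis using mm_pos[OF p0 p1 n1] by (simp add: less_imp_le)
  next
    case False then show ?thesis by (simp add: mm_def)
  qed
  have "0 \<le> real k / n * ((1 - p) * mm n p k + (1 - (1 - p)) * mm n p (k - 1)) +
     (real n - real k) / n * ((1 - p) * mm n p (k + 1) + (1 - (1 - p)) * mm n p k)"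
    using p0 p1 k nn by (intro add_nonneg_nonneg mult_nonneg_nonneg) auto
  then show ?thesis using harmonic[OF p0 p1 n1 k] by simp
qed

lemma card_sub: "A \<subseteq> {..<n} \<Longrightarrow> card A \<le> n \<and> (A = {..<n} \<longleftrightarrow> card A = n)"
  by (metis card_lessThan card_mono card_subset_eq finite_lessThan)

lemma stp_sub: "A \<subseteq> {..<n} \<Longrightarrow> x \<in> {..<n} \<times> UNIV \<Longrightarrow> stp A x \<subseteq> {..<n}"
  by (auto simp: stp_def)

lemma u0: "measure PP (Ev n A 0) = (if A = {..<n} then 0 else 1)"
proof -
  interpret prob_space PP by (rule prob_space_clumsy)
  have "Ev n A 0 = (if A = {..<n} then {} else space PP)"
    by (auto simp: Ev_def space_clumsy)
  then show ?thesis by (simp add: prob_space)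
qed

lemma upper:
  "A \<subseteq> {..<n} \<Longrightarrow> measure PP (Ev n A t) \<le> (1 - 1 / mm n p 0) ^ t * mm n p (card A) / mm n p (n - 1)"
proof (induction t arbitrary: A)
  case 0
  have m1: "mm n p (n - 1) > 0" using mm_pos[OF p0 p1 n1, of "n - 1"] n1 by simp
  show ?case
  proof (cases "A = {..<n}")
    case True then show ?thesis by (simp add: u0 mm_n[OF p0 p1 n1])
  next
    case False
    then have "card A < n" using card_sub[OF 0] by auto
    then have "mm n p (n - 1) \<le> mm n p (card A)" by (intro mm_mono[OF p0 p1 n1]) auto
    then show ?thesis using False m1 by (simp add: u0)
  qed
next
  case (Suc t)
  let ?C = "(1 - 1 / mm n p 0) ^ t / mm n p (n - 1)"
  have m1: "mm n p (n - 1) > 0" using mm_pos[OF p0 p1 n1, of "n - 1"] n1 by simp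
  have m0: "mm n p 0 \<ge> 1" using mm_ge1[of 0] n1 by simp
  have C0: "?C \<ge> 0" using m1 m0 by simp
  show ?case
  proof (cases "A = {..<n}")
    case True then show ?thesis using n1 by (simp add: one_step mm_n[OF p0 p1 n1] card_sub)
  next
    case False
    let ?k = "card A"
    have k: "?k < n" using card_sub[OF Suc.prems] False by auto
    have "measure PP (Ev n A (Suc t)) =
      (\<Sum>x\<in>{..<n}\<times>UNIV. pmf (clumsy_step n (1 - p)) x * measure PP (Ev n (stp A x) t))"
      using False n1 by (simp add: one_step)
    also have "\<dots> \<le> (\<Sum>x\<in>{..<n}\<times>UNIV. pmf (clumsy_step n (1 - p)) x * (?C * mm n p (card (stp A x))))"
      using Suc.IH[OF stp_sub[OF Suc.prems]]
      by (intro sum_mono mult_left_mono) (auto simp: pmf_nonneg)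
    also have "\<dots> = ?C * (\<Sum>x\<in>{..<n}\<times>UNIV. pmf (clumsy_step n (1 - p)) x * mm n p (card (stp A x)))"
      by (simp add: sum_distrib_left mult_ac)
    also have "\<dots> = ?C * (mm n p ?k - 1)"
      using lump[OF n1 _ _ Suc.prems, of "1 - p" "mm n p"] harmonic[OF p0 p1 n1 k] p0 p1 by simp
    also have "\<dots> \<le> ?C * ((1 - 1 / mm n p 0) * mm n p ?k)"
    proof (rule mult_left_mono[OF _ C0])
      have "mm n p ?k \<le> mm n p 0" by (rule mm_mono[OF p0 p1 n1]) simp
      then have "mm n p ?k / mm n p 0 \<le> 1" using m0 by simp
      then show "mm n p ?k - 1 \<le> (1 - 1 / mm n p 0) * mm n p ?k" by (simp add: algebra_simps)
    qed
    also have "\<dots> = (1 - 1 / mm n p 0) ^ Suc t * mm n p ?k / mm n p (n - 1)" by simp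
    finally show ?thesis .
  qed
qed

lemma lower:
  "A \<subseteq> {..<n} \<Longrightarrow> (1 - 1 / mm n p (n - 1)) ^ t * mm n p (card A) / mm n p 0 \<le> measure PP (Ev n A t)"
proof (induction t arbitrary: A)
  case 0
  have m0: "mm n p 0 > 0" using mm_pos[OF p0 p1 n1, of 0] n1 by simp
  show ?case
  proof (cases "A = {..<n}")
    case True then show ?thesis by (simp add: u0 mm_n[OF p0 p1 n1])
  next
    case False
    have "mm n p (card A) \<le> mm n p 0" by (intro mm_mono[OF p0 p1 n1]) auto
    then show ?thesis using False m0 by (simp add: u0)
  qed
next
  case (Suc t)
  let ?C = "(1 - 1 / mm n p (n - 1)) ^ t / mm n p 0"
  have m0: "mm n p 0 > 0" using mm_pos[OF p0 p1 n1, of 0] n1 by simp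
  have m1: "mm n p (n - 1) \<ge> 1" using mm_ge1[of "n - 1"] n1 by simp
  have C0: "?C \<ge> 0" using m1 m0 by simp
  show ?case
  proof (cases "A = {..<n}")
    case True then show ?thesis using n1 by (simp add: one_step mm_n[OF p0 p1 n1] card_sub)
  next
    case False
    let ?k = "card A"
    have k: "?k < n" using card_sub[OF Suc.prems] False by auto
    have "(1 - 1 / mm n p (n - 1)) ^ Suc t * mm n p ?k / mm n p 0 = ?C * ((1 - 1 / mm n p (n - 1)) * mm n p ?k)"
      by simp
    also have "\<dots> \<le> ?C * (mm n p ?k - 1)"
    proof (rule mult_left_mono[OF _ C0])
      have "mm n p (n - 1) \<le> mm n p ?k" by (rule mm_mono[OF p0 p1 n1]) (use k in simp)
      then have "mm n p ?k / mm n p (n - 1) \<ge> 1" using m1 by simp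
      then show "(1 - 1 / mm n p (n - 1)) * mm n p ?k \<le> mm n p ?k - 1" by (simp add: algebra_simps)
    qed
    also have "\<dots> = ?C * (\<Sum>x\<in>{..<n}\<times>UNIV. pmf (clumsy_step n (1 - p)) x * mm n p (card (stp A x)))"
      using lump[OF n1 _ _ Suc.prems, of "1 - p" "mm n p"] harmonic[OF p0 p1 n1 k] p0 p1 by simp
    also have "\<dots> = (\<Sum>x\<in>{..<n}\<times>UNIV. pmf (clumsy_step n (1 - p)) x * (?C * mm n p (card (stp A x))))"
      by (simp add: sum_distrib_left mult_ac)
    also have "\<dots> \<le> (\<Sum>x\<in>{..<n}\<times>UNIV. pmf (clumsy_step n (1 - p)) x * measure PP (Ev n (stp A x) t))"
      using Suc.IH[OF stp_sub[OF Suc.prems]]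
      by (intro sum_mono mult_left_mono) (auto simp: pmf_nonneg)
    also have "\<dots> = measure PP (Ev n A (Suc t))"
      using False n1 by (simp add: one_step)
    finally show ?thesis .
  qed
qed

end

context
  fixes n :: nat and p :: real
  assumes p0: "0 < p" and p1: "p < 1" and n1: "1 \<le> n"
begin

lemma Fc_n: "Fc n p n = 1"
proof -
  have "((1 - p) + p) ^ n = (\<Sum>k\<le>n. real (n choose k) * (1 - p) ^ k * p ^ (n - k))"
    by (rule binomial_ring)
  then show ?thesis by (simp add: Fc_def piB_def)
qed

lemma Fc_le1: "j \<le> n \<Longrightarrow> Fc n p j \<le> 1"
  unfolding Fc_n[symmetric] Fc_def
  by (rule sum_mono2) (auto intro: piB_nonneg[OF p0 p1 n1])

lemma choose_le_mult:
  assumes "l \<le> n - r" "r \<le> n"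
  shows "real (n choose l) \<le> real (n choose r) * real ((n - r) choose l)"
proof -
  have cm: "(n choose (n - l)) * ((n - l) choose r) = (n choose r) * ((n - r) choose (n - l - r))"
    using assms by (intro choose_mult) auto
  have s1: "n choose (n - l) = n choose l" using assms by (metis binomial_symmetric diff_le_self le_trans)
  have s2: "(n - r) choose (n - l - r) = (n - r) choose l"
  proof -
    have "n - l - r = (n - r) - l" by simp
    then show ?thesis using assms binomial_symmetric[of l "n - r"] by simp
  qed
  have pos: "(n - l) choose r \<ge> 1" using assms by (simp add: Suc_leI)
  have "n choose l \<le> (n choose l) * ((n - l) choose r)" using pos by simp
  also have "\<dots> = (n choose r) * ((n - r) choose l)" using cm s1 s2 by simp
  finally show ?thesis by (simp flip: of_nat_mult)
qed

lemma Fc_tail: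
  assumes "r \<le> n"
  shows "Fc n p (n - r) \<le> real (n choose r) * p ^ r"
proof -
  have "Fc n p (n - r) = (\<Sum>l\<le>n - r. real (n choose l) * (1 - p) ^ l * p ^ (n - l))"
    by (simp add: Fc_def piB_def)
  also have "\<dots> \<le> (\<Sum>l\<le>n - r. real (n choose r) * p ^ r * (real ((n - r) choose l) * (1 - p) ^ l * p ^ (n - r - l)))"
  proof (rule sum_mono)
    fix l assume l: "l \<in> {..n - r}"
    have pe: "p ^ (n - l) = p ^ r * p ^ (n - r - l)"
      using l assms by (simp add: power_add[symmetric])
    have "real (n choose l) * ((1 - p) ^ l * p ^ (n - l)) \<le>
          (real (n choose r) * real ((n - r) choose l)) * ((1 - p) ^ l * p ^ (n - l))"
      using choose_le_mult[of l r] l assms p0 p1 by (intro mult_right_mono) auto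
    then show "real (n choose l) * (1 - p) ^ l * p ^ (n - l) \<le>
          real (n choose r) * p ^ r * (real ((n - r) choose l) * (1 - p) ^ l * p ^ (n - r - l))"
      unfolding pe by (simp add: mult_ac)
  qed
  also have "\<dots> = real (n choose r) * p ^ r * (\<Sum>l\<le>n - r. real ((n - r) choose l) * (1 - p) ^ l * p ^ (n - r - l))"
    by (simp only: sum_distrib_left)
  also have "(\<Sum>l\<le>n - r. real ((n - r) choose l) * (1 - p) ^ l * p ^ (n - r - l)) = ((1 - p) + p) ^ (n - r)"
    by (rule binomial_ring[symmetric])
  finally show ?thesis by simp
qed

lemma dd_last: "dd n p (n - 1) = (1 - (1 - p) ^ n) / (p * (1 - p) ^ n)"
proof -
  obtain m where m: "n = Suc m" using n1 by (cases n) auto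
  have F: "Fc n p m = 1 - (1 - p) ^ n"
    using Fc_n unfolding Fc_def m by (simp add: piB_def)
  have D: "piB n p m * ((1 - p) * (real n - real m) / n) = p * (1 - p) ^ n"
    unfolding piB_def m by (simp add: field_simps)
  show ?thesis unfolding dd_def using F D m by simp
qed

lemma T_exact:
  assumes "j < n"
  shows "p * (1 - p) ^ n * dd n p j = Fc n p j * (1 - p) ^ (n - 1 - j) / (real ((n - 1) choose j) * p ^ (n - 1 - j))"
proof -
  have bin: "real (n - j) * real (n choose j) = real n * real ((n - 1) choose j)"
    by (metis binomial_absorb_comp of_nat_mult)
  have nj: "real n - real j = real (n - j)" using assms by (simp add: of_nat_diff)
  have c: "real ((n - 1) choose j) > 0" using assms by simp
  have den: "piB n p j * ((1 - p) * (real n - real j) / n) = real ((n - 1) choose j) * (1 - p) ^ Suc j * p ^ Suc (n - 1 - j)"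
  proof -
    have e: "n - j = Suc (n - 1 - j)" using assms by simp
    have "piB n p j * ((1 - p) * (real n - real j) / n) = (real (n - j) * real (n choose j)) * (1 - p) ^ Suc j * p ^ (n - j) / n"
      unfolding piB_def nj by (simp add: field_simps)
    also have "\<dots> = (real n * real ((n - 1) choose j)) * (1 - p) ^ Suc j * p ^ Suc (n - 1 - j) / n"
      unfolding bin by (simp only: e)
    also have "\<dots> = real ((n - 1) choose j) * (1 - p) ^ Suc j * p ^ Suc (n - 1 - j)"
      using n1 by simp
    finally show ?thesis .
  qed
  have qn: "(1 - p) ^ n = (1 - p) ^ Suc j * (1 - p) ^ (n - 1 - j)"
  proof -
    have "n = Suc j + (n - 1 - j)" using assms by simp
    then show ?thesis by (metis power_add)
  qed
  show ?thesis unfolding dd_def den qn using c p0 p1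
    by (simp add: field_simps)
qed

lemma T_i:
  assumes "1 \<le> i" "i \<le> n - 1"
  shows "p * (1 - p) ^ n * dd n p (n - 1 - i) = Fc n p (n - 1 - i) * (1 - p) ^ i / (real ((n - 1) choose i) * p ^ i)"
proof -
  have "n - 1 - (n - 1 - i) = i" using assms by simp
  moreover have "(n - 1) choose (n - 1 - i) = (n - 1) choose i"
    using assms by (metis binomial_symmetric calculation diff_le_self)
  ultimately show ?thesis using T_exact[of "n - 1 - i"] assms by simp
qed

lemma TA:
  assumes "1 \<le> i" "i \<le> K" "K \<le> n - 1"
  shows "p * (1 - p) ^ n * dd n p (n - 1 - i) \<le> ((1 - p) * K / (p * (n - 1))) ^ i"
proof -
  have i: "i \<le> n - 1" using assms by simp
  have c: "real ((n - 1) choose i) > 0" using i by simp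
  have F: "Fc n p (n - 1 - i) \<le> 1" by (rule Fc_le1) simp
  have "p * (1 - p) ^ n * dd n p (n - 1 - i) \<le> 1 * (1 - p) ^ i / (real ((n - 1) choose i) * p ^ i)"
    unfolding T_i[OF assms(1) i] using c p0 p1 F
    by (intro divide_right_mono mult_right_mono) auto
  also have "\<dots> = ((1 - p) / p) ^ i / real ((n - 1) choose i)"
    by (simp add: power_divide)
  also have "\<dots> \<le> ((1 - p) / p) ^ i * (real i / real (n - 1)) ^ i"
  proof -
    have b: "(real (n - 1) / real i) ^ i \<le> real ((n - 1) choose i)"
      by (rule binomial_ge_n_over_k_pow_k[OF i])
    have pos: "(real (n - 1) / real i) ^ i > 0" using assms i by auto
    have "1 / real ((n - 1) choose i) \<le> 1 / (real (n - 1) / real i) ^ i"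
      using b pos c by (intro divide_left_mono) auto
    also have "\<dots> = (real i / real (n - 1)) ^ i" by (simp add: power_divide)
    finally show ?thesis using p0 p1
      by (metis (no_types, lifting) divide_inverse less_eq_real_def mult.right_neutral
          mult_left_mono divide_pos_pos zero_less_power diff_gt_0_iff_gt inverse_eq_divide)
  qed
  also have "\<dots> = ((1 - p) * i / (p * (n - 1))) ^ i"
    using n1 by (simp add: power_mult_distrib[symmetric] of_nat_diff)
  also have "\<dots> \<le> ((1 - p) * K / (p * (n - 1))) ^ i"
    using assms p0 p1 by (intro power_mono divide_right_mono mult_left_mono) auto
  finally show ?thesis .
qed

lemma TB:
  assumes "1 \<le> i" "i \<le> n - 1"
  shows "p * (1 - p) ^ n * dd n p (n - 1 - i) \<le> n * p * (1 - p) ^ i"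
proof -
  have c: "real ((n - 1) choose i) > 0" using assms by simp
  have e: "n - 1 - i = n - Suc i" by simp
  have F: "Fc n p (n - 1 - i) \<le> real (n choose Suc i) * p ^ Suc i"
    unfolding e using assms by (intro Fc_tail) auto
  have bin: "real (Suc i) * real (n choose Suc i) = real n * real ((n - 1) choose i)"
    by (metis binomial_absorption of_nat_mult)
  have "p * (1 - p) ^ n * dd n p (n - 1 - i) \<le> real (n choose Suc i) * p ^ Suc i * (1 - p) ^ i / (real ((n - 1) choose i) * p ^ i)"
    unfolding T_i[OF assms] using c p0 p1 F
    by (intro divide_right_mono mult_right_mono) auto
  also have "\<dots> = p * (1 - p) ^ i * (real (n choose Suc i) / real ((n - 1) choose i))"
    using p0 by (simp add: field_simps)
  also have "real (n choose Suc i) / real ((n - 1) choose i) = real n / real (Suc i)"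
    using bin c by (simp add: field_simps)
  also have "p * (1 - p) ^ i * (real n / real (Suc i)) \<le> p * (1 - p) ^ i * real n"
    using p0 p1 by (intro mult_left_mono) (auto simp: field_simps)
  finally show ?thesis by (simp add: mult_ac)
qed

lemma geom_partial: "0 \<le> (x::real) \<Longrightarrow> x < 1 \<Longrightarrow> (\<Sum>i<N. x ^ i) \<le> 1 / (1 - x)"
proof -
  assume x: "0 \<le> x" "x < 1"
  have "(\<Sum>i<N. x ^ i) = (1 - x ^ N) / (1 - x)" using x by (simp add: sum_gp_strict)
  also have "\<dots> \<le> 1 / (1 - x)" using x by (intro divide_right_mono) auto
  finally show ?thesis .
qed

lemma R_bound:
  assumes K: "K \<le> n - 1" and rho: "(1 - p) * K / (p * (n - 1)) \<le> 1 / 2"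
  shows "p * (1 - p) ^ n * (\<Sum>j<n - 1. dd n p j) \<le>
     2 * ((1 - p) * K / (p * (n - 1))) + n * p * sqrt (1 - p) ^ K / (1 - sqrt (1 - p))"
proof -
  define \<rho> where "\<rho> = (1 - p) * K / (p * (n - 1))"
  define s where "s = sqrt (1 - p)"
  have \<rho>0: "0 \<le> \<rho>" unfolding \<rho>_def using p0 p1 by auto
  have \<rho>1: "\<rho> \<le> 1 / 2" using rho unfolding \<rho>_def .
  have s0: "0 \<le> s" "s < 1" unfolding s_def using p0 p1 by auto
  have q: "1 - p = s * s" unfolding s_def using p1 by simp
  let ?N = "n - 1"
  have "p * (1 - p) ^ n * (\<Sum>j<?N. dd n p j) = (\<Sum>j<?N. p * (1 - p) ^ n * dd n p j)"
    by (simp add: sum_distrib_left)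
  also have "\<dots> = (\<Sum>i<?N. p * (1 - p) ^ n * dd n p (?N - Suc i))"
    using sum.nat_diff_reindex[where g = "\<lambda>j. p * (1 - p) ^ n * dd n p j" and n = "n - 1"] by simp
  also have "\<dots> \<le> (\<Sum>i<?N. \<rho> ^ Suc i + n * p * (s ^ K * s ^ Suc i))"
  proof (rule sum_mono)
    fix i assume i: "i \<in> {..<?N}"
    show "p * (1 - p) ^ n * dd n p (?N - Suc i) \<le> \<rho> ^ Suc i + n * p * (s ^ K * s ^ Suc i)"
    proof (cases "Suc i \<le> K")
      case True
      have "p * (1 - p) ^ n * dd n p (?N - Suc i) \<le> \<rho> ^ Suc i"
        unfolding \<rho>_def by (rule TA) (use True K in auto)
      moreover have "0 \<le> n * p * (s ^ K * s ^ Suc i)" using p0 s0 by simp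
      ultimately show ?thesis by linarith
    next
      case False
      have "p * (1 - p) ^ n * dd n p (?N - Suc i) \<le> n * p * (1 - p) ^ Suc i"
        by (rule TB) (use i in auto)
      also have "(1 - p) ^ Suc i = s ^ Suc i * s ^ Suc i" by (simp only: q power_mult_distrib)
      also have "n * p * (s ^ Suc i * s ^ Suc i) \<le> n * p * (s ^ K * s ^ Suc i)"
        using False s0 p0 by (intro mult_left_mono mult_right_mono power_decreasing) auto
      finally have "p * (1 - p) ^ n * dd n p (?N - Suc i) \<le> n * p * (s ^ K * s ^ Suc i)" .
      moreover have "0 \<le> \<rho> ^ Suc i" using \<rho>0 by simp
      ultimately show ?thesis by linarith
    qed
  qed
  also have "\<dots> = \<rho> * (\<Sum>i<?N. \<rho> ^ i) + n * p * s ^ K * (s * (\<Sum>i<?N. s ^ i))"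
    by (simp add: sum.distrib sum_distrib_left mult.assoc)
  also have "\<dots> \<le> \<rho> * (1 / (1 - \<rho>)) + n * p * s ^ K * (1 / (1 - s))"
  proof (rule add_mono)
    show "\<rho> * (\<Sum>i<?N. \<rho> ^ i) \<le> \<rho> * (1 / (1 - \<rho>))"
      using \<rho>0 \<rho>1 by (intro mult_left_mono geom_partial) auto
    have "s * (\<Sum>i<?N. s ^ i) \<le> 1 * (1 / (1 - s))"
      using s0 geom_partial[of s ?N] by (intro mult_mono) (auto intro: sum_nonneg)
    then show "n * p * s ^ K * (s * (\<Sum>i<?N. s ^ i)) \<le> n * p * s ^ K * (1 / (1 - s))"
      using s0 p0 by (intro mult_left_mono) auto
  qed
  also have "\<dots> \<le> 2 * \<rho> + n * p * s ^ K / (1 - s)"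
  proof -
    have "\<rho> * (1 / (1 - \<rho>)) \<le> 2 * \<rho>"
    proof -
      have "1 / (1 - \<rho>) \<le> 2" using \<rho>0 \<rho>1 by (simp add: field_simps)
      then show ?thesis using \<rho>0 by (metis mult.commute mult_left_mono)
    qed
    then show ?thesis by simp
  qed
  finally show ?thesis unfolding \<rho>_def s_def .
qed

end

lemma ra1: "0 < s \<Longrightarrow> s < 1 \<Longrightarrow> (\<lambda>n::nat. real n * s powr (sqrt (real n) - 1)) \<longlonglongrightarrow> 0"
  by real_asymp

lemma ra2: "(\<lambda>n::nat. sqrt (real n) / (real n - 1)) \<longlonglongrightarrow> 0"
  by real_asymp

lemma ra3: "((\<lambda>y::real. y * ln (1 - 1 / y)) \<longlongrightarrow> -1) at_top"
  by real_asymp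

lemma exp_limit:
  fixes M c :: "nat \<Rightarrow> real" and x :: real
  assumes Mc: "(\<lambda>n. M n * c n) \<longlonglongrightarrow> 1" and c0: "\<And>n. c n > 0" and c: "c \<longlonglongrightarrow> 0" and x: "x \<ge> 0"
  shows "(\<lambda>n. (1 - 1 / M n) ^ nat \<lfloor>x / c n\<rfloor>) \<longlonglongrightarrow> exp (- x)"
proof -
  define t where "t n = nat \<lfloor>x / c n\<rfloor>" for n
  have Mtop: "filterlim M at_top sequentially"
  proof -
    have "filterlim (\<lambda>n. inverse (c n)) at_top sequentially"
      using c c0 by (intro filterlim_inverse_at_top) auto
    then have "filterlim (\<lambda>n. (M n * c n) * inverse (c n)) at_top sequentially"
      by (rule filterlim_tendsto_pos_mult_at_top[OF Mc zero_less_one])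
    moreover have "(M n * c n) * inverse (c n) = M n" for n using c0[of n] by simp
    ultimately show ?thesis by simp
  qed
  have tc: "(\<lambda>n. real (t n) * c n) \<longlonglongrightarrow> x"
  proof (rule tendsto_sandwich[of "\<lambda>n. x - c n" _ _ "\<lambda>n. x"])
    show "\<forall>\<^sub>F n in sequentially. x - c n \<le> real (t n) * c n"
    proof (intro always_eventually allI)
      fix n
      have "x / c n - 1 \<le> real (t n)" unfolding t_def using x c0[of n]
        by (simp add: of_nat_nat)
      then have "(x / c n - 1) * c n \<le> real (t n) * c n" using c0[of n] by (intro mult_right_mono) auto
      moreover have "(x / c n - 1) * c n = x - c n" using c0[of n] by (simp add: field_simps)
      ultimately show "x - c n \<le> real (t n) * c n" by linarith
    qed
    show "\<forall>\<^sub>F n in sequentially. real (t n) * c n \<le> x"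
    proof (intro always_eventually allI)
      fix n
      have "real (t n) \<le> x / c n" unfolding t_def using x c0[of n]
        by (simp add: of_nat_nat)
      then have "real (t n) * c n \<le> x / c n * c n" using c0[of n] by (intro mult_right_mono) auto
      then show "real (t n) * c n \<le> x" using c0[of n] by simp
    qed
    show "(\<lambda>n. x - c n) \<longlonglongrightarrow> x" using tendsto_diff[OF tendsto_const c] by simp
  qed simp
  have L: "(\<lambda>n. M n * ln (1 - 1 / M n)) \<longlonglongrightarrow> -1"
    using filterlim_compose[OF ra3 Mtop] by (simp add: o_def)
  have prod: "(\<lambda>n. (real (t n) * c n) * inverse (M n * c n) * (M n * ln (1 - 1 / M n))) \<longlonglongrightarrow> x * inverse 1 * (-1)"
    by (intro tendsto_mult tendsto_inverse tc Mc L) simp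
  have ev: "\<forall>\<^sub>F n in sequentially. M n > 1"
    using Mtop by (simp add: filterlim_at_top_dense)
  have "(\<lambda>n. exp ((real (t n) * c n) * inverse (M n * c n) * (M n * ln (1 - 1 / M n)))) \<longlonglongrightarrow> exp (x * inverse 1 * (-1))"
    by (intro tendsto_exp prod)
  then have lim: "(\<lambda>n. exp ((real (t n) * c n) * inverse (M n * c n) * (M n * ln (1 - 1 / M n)))) \<longlonglongrightarrow> exp (- x)"
    by simp
  have ev2: "\<forall>\<^sub>F n in sequentially. exp ((real (t n) * c n) * inverse (M n * c n) * (M n * ln (1 - 1 / M n))) = (1 - 1 / M n) ^ t n"
    using ev
  proof eventually_elim
    case (elim n)
    have pos: "1 - 1 / M n > 0" using elim by (simp add: field_simps)
    have "(real (t n) * c n) * inverse (M n * c n) * (M n * ln (1 - 1 / M n)) = real (t n) * ln (1 - 1 / M n)"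
      using c0[of n] elim by (simp add: field_simps)
    then have "exp ((real (t n) * c n) * inverse (M n * c n) * (M n * ln (1 - 1 / M n))) =
       exp (real (t n) * ln (1 - 1 / M n))" by (simp only:)
    also have "\<dots> = exp (ln (1 - 1 / M n)) ^ t n" by (rule exp_of_nat_mult)
    also have "\<dots> = (1 - 1 / M n) ^ t n" using pos by simp
    finally show ?case .
  qed
  have "(\<lambda>n. (1 - 1 / M n) ^ t n) \<longlonglongrightarrow> exp (- x)"
    using tendsto_cong[OF ev2] lim by simp
  then show ?thesis unfolding t_def .
qed

context
  fixes p :: real
  assumes p0: "0 < p" and p1: "p < 1"
begin

lemma mm_last_eq: "1 \<le> n \<Longrightarrow> mm n p (n - 1) * (p * (1 - p) ^ n) = 1 - (1 - p) ^ n"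
proof -
  assume n: "1 \<le> n"
  have "mm n p (n - 1) = dd n p (n - 1)" unfolding mm_def using n
    by (subst sum.atLeast_Suc_lessThan) auto
  then show ?thesis using dd_last[OF p0 p1 n] p0 p1 by simp
qed

lemma qn0: "(\<lambda>n. (1 - p) ^ n) \<longlonglongrightarrow> 0"
  using p0 p1 by (intro LIMSEQ_power_zero) auto

lemma mm_last_lim: "(\<lambda>n. mm n p (n - 1) * (p * (1 - p) ^ n)) \<longlonglongrightarrow> 1"
proof -
  have "(\<lambda>n. 1 - (1 - p) ^ n) \<longlonglongrightarrow> 1" using tendsto_diff[OF tendsto_const qn0, of 1] by simp
  moreover have "\<forall>\<^sub>F n in sequentially. 1 - (1 - p) ^ n = mm n p (n - 1) * (p * (1 - p) ^ n)"
    using eventually_ge_at_top[of 1] by eventually_elim (metis mm_last_eq)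
  ultimately show ?thesis by (rule Lim_transform_eventually)
qed

lemma R_lim: "(\<lambda>n. p * (1 - p) ^ n * (\<Sum>j<n - 1. dd n p j)) \<longlonglongrightarrow> 0"
proof -
  define K where "K n = nat \<lfloor>sqrt (real n)\<rfloor>" for n :: nat
  define s where "s = sqrt (1 - p)"
  define \<rho> where "\<rho> n = (1 - p) * real (K n) / (p * real (n - 1))" for n
  define g where "g n = (1 - p) / p * (sqrt (real n) / (real n - 1))" for n :: nat
  define V where "V n = 2 * g n + p / (1 - s) * (real n * s powr (sqrt (real n) - 1))" for n :: nat
  have s0: "0 < s" "s < 1" unfolding s_def using p0 p1 by auto
  have Kle: "real (K n) \<le> sqrt (real n)" for n unfolding K_def by simp
  have Kge: "sqrt (real n) - 1 \<le> real (K n)" for n unfolding K_def by linarith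
  have g0: "g \<longlonglongrightarrow> 0" unfolding g_def using tendsto_mult[OF tendsto_const ra2, of "(1 - p) / p"] by simp
  have V0: "V \<longlonglongrightarrow> 0" unfolding V_def
    using tendsto_add[OF tendsto_mult[OF tendsto_const g0, of 2] tendsto_mult[OF tendsto_const ra1[OF s0], of "p / (1 - s)"]]
    by simp
  have ev1: "\<forall>\<^sub>F n in sequentially. sqrt (real n) / (real n - 1) < 1"
    using order_tendstoD(2)[OF ra2, of 1] by simp
  have evK: "\<forall>\<^sub>F n in sequentially. K n \<le> n - 1 \<and> 2 \<le> n"
    using ev1 eventually_ge_at_top[of 2]
  proof eventually_elim
    case (elim n)
    then have "sqrt (real n) < real n - 1" by (simp add: field_simps)
    then have "real (K n) < real n - 1" using Kle[of n] by linarith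
    then show ?case using elim by linarith
  qed
  have \<rho>g: "\<forall>\<^sub>F n in sequentially. 0 \<le> \<rho> n \<and> \<rho> n \<le> g n"
    using evK
  proof eventually_elim
    case (elim n)
    have n1: "real (n - 1) = real n - 1" using elim by (simp add: of_nat_diff)
    have pos: "real n - 1 > 0" using elim by simp
    have "\<rho> n = (1 - p) / p * (real (K n) / (real n - 1))" unfolding \<rho>_def n1 by simp
    also have "\<dots> \<le> g n" unfolding g_def using p0 p1 pos Kle[of n]
      by (intro mult_left_mono divide_right_mono) auto
    finally show ?case unfolding \<rho>_def using p0 p1 by simp
  qed
  have \<rho>0: "\<rho> \<longlonglongrightarrow> 0"
    by (rule tendsto_sandwich[of "\<lambda>_. 0" _ _ g]) (use \<rho>g g0 in \<open>auto elim: eventually_mono\<close>)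
  have ev\<rho>: "\<forall>\<^sub>F n in sequentially. \<rho> n \<le> 1 / 2"
    using order_tendstoD(2)[OF \<rho>0, of "1/2"] by (auto elim: eventually_mono)
  have lowR: "\<forall>\<^sub>F n in sequentially. 0 \<le> p * (1 - p) ^ n * (\<Sum>j<n - 1. dd n p j)"
    using eventually_ge_at_top[of 1]
  proof eventually_elim
    case (elim n)
    have "0 \<le> (\<Sum>j<n - 1. dd n p j)"
      using dd_pos[OF p0 p1 elim] by (intro sum_nonneg) (auto intro: less_imp_le)
    then show ?case using p0 p1 by simp
  qed
  have upR: "\<forall>\<^sub>F n in sequentially. p * (1 - p) ^ n * (\<Sum>j<n - 1. dd n p j) \<le> V n"
    using evK ev\<rho> \<rho>g
  proof eventually_elim
    case (elim n)
    have n1: "1 \<le> n" using elim by simp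
    have "p * (1 - p) ^ n * (\<Sum>j<n - 1. dd n p j) \<le> 2 * \<rho> n + n * p * s ^ K n / (1 - s)"
      unfolding \<rho>_def s_def using elim by (intro R_bound[OF p0 p1 n1]) (auto simp: \<rho>_def)
    also have "\<dots> \<le> V n"
    proof -
      have "s ^ K n = s powr real (K n)" using s0 by (simp add: powr_realpow)
      also have "\<dots> \<le> s powr (sqrt (real n) - 1)" using s0 Kge[of n] by (intro powr_mono') auto
      finally have A: "s ^ K n \<le> s powr (sqrt (real n) - 1)" .
      have "real n * p * s ^ K n / (1 - s) \<le> real n * p * s powr (sqrt (real n) - 1) / (1 - s)"
        using A s0 p0 by (intro divide_right_mono mult_left_mono) auto
      also have "\<dots> = p / (1 - s) * (real n * s powr (sqrt (real n) - 1))" by simp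
      finally have "real n * p * s ^ K n / (1 - s) \<le> p / (1 - s) * (real n * s powr (sqrt (real n) - 1))" .
      then show ?thesis unfolding V_def using elim by linarith
    qed
    finally show ?case .
  qed
  show ?thesis by (rule tendsto_sandwich[OF lowR upR tendsto_const V0])
qed

lemma mm0_lim: "(\<lambda>n. mm n p 0 * (p * (1 - p) ^ n)) \<longlonglongrightarrow> 1"
proof -
  have "(\<lambda>n. p * (1 - p) ^ n * (\<Sum>j<n - 1. dd n p j) + mm n p (n - 1) * (p * (1 - p) ^ n)) \<longlonglongrightarrow> 0 + 1"
    by (intro tendsto_add R_lim mm_last_lim)
  moreover have "\<forall>\<^sub>F n in sequentially. p * (1 - p) ^ n * (\<Sum>j<n - 1. dd n p j) + mm n p (n - 1) * (p * (1 - p) ^ n) = mm n p 0 * (p * (1 - p) ^ n)"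
    using eventually_ge_at_top[of 1]
  proof eventually_elim
    case (elim n)
    then obtain m where m: "n = Suc m" by (cases n) auto
    have "mm n p (n - 1) = dd n p m" unfolding mm_def m by simp
    moreover have "mm n p 0 = (\<Sum>j<m. dd n p j) + dd n p m" unfolding mm_def m
      by (simp add: atLeast0LessThan)
    ultimately show ?case unfolding m by (simp add: algebra_simps)
  qed
  ultimately show ?thesis by (simp add: Lim_transform_eventually)
qed

end


lemma T_enat_iff: "clumsy_T n \<omega> = enat k \<longleftrightarrow> st {} \<omega> k = {..<n} \<and> (\<forall>s<k. st {} \<omega> s \<noteq> {..<n})"
proof
  assume T: "clumsy_T n \<omega> = enat k"
  then have ex: "\<exists>t. st {} \<omega> t = {..<n}" and L: "(LEAST t. st {} \<omega> t = {..<n}) = k"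
    unfolding clumsy_T_def clumsy_state_st by (auto split: if_splits)
  show "st {} \<omega> k = {..<n} \<and> (\<forall>s<k. st {} \<omega> s \<noteq> {..<n})"
    using LeastI_ex[OF ex] not_less_Least[where P = "\<lambda>t. st {} \<omega> t = {..<n}"] L by auto
next
  assume A: "st {} \<omega> k = {..<n} \<and> (\<forall>s<k. st {} \<omega> s \<noteq> {..<n})"
  have "(LEAST t. st {} \<omega> t = {..<n}) = k"
    apply (rule Least_equality)
    using A apply blast
    using A by (metis leI)
  then show "clumsy_T n \<omega> = enat k" using A unfolding clumsy_T_def clumsy_state_st by auto
qed

lemma T_inf_iff: "clumsy_T n \<omega> = \<infinity> \<longleftrightarrow> (\<forall>t. st {} \<omega> t \<noteq> {..<n})"
  unfolding clumsy_T_def clumsy_state_st by auto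

lemma T_gt_iff: "enat t < clumsy_T n \<omega> \<longleftrightarrow> \<omega> \<in> Ev n {} t"
proof (cases "clumsy_T n \<omega>")
  case (enat k)
  then have k: "st {} \<omega> k = {..<n}" "\<forall>s<k. st {} \<omega> s \<noteq> {..<n}" using T_enat_iff by auto
  have "t < k \<longleftrightarrow> (\<forall>s\<le>t. st {} \<omega> s \<noteq> {..<n})"
  proof
    assume "t < k" then show "\<forall>s\<le>t. st {} \<omega> s \<noteq> {..<n}" using k(2) by auto
  next
    assume H: "\<forall>s\<le>t. st {} \<omega> s \<noteq> {..<n}"
    show "t < k"
    proof (rule ccontr)
      assume "\<not> t < k" then have "k \<le> t" by simp
      then show False using H k(1) by blast
    qed
  qed
  then show ?thesis unfolding enat Ev_def by simp
next
  case infinity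
  then show ?thesis using T_inf_iff[of n \<omega>] by (simp add: Ev_def)
qed

lemma T_meas: "clumsy_T n \<in> measurable (clumsy_space n q) (count_space UNIV)"
  unfolding measurable_count_space_eq2_countable
proof (intro conjI ballI)
  show "clumsy_T n \<in> space (clumsy_space n q) \<rightarrow> UNIV" by simp
  fix a :: enat
  show "clumsy_T n -` {a} \<inter> space (clumsy_space n q) \<in> sets (clumsy_space n q)"
  proof (cases a)
    case (enat k)
    have "clumsy_T n -` {a} \<inter> space (clumsy_space n q) =
      {\<omega>. st {} \<omega> k \<in> {{..<n}}} - (\<Union>s\<in>{..<k}. {\<omega>. st {} \<omega> s \<in> {{..<n}}})"
      unfolding enat by (rule set_eqI) (simp add: space_clumsy T_enat_iff Ball_def)
    moreover have "(\<Union>s\<in>{..<k}. {\<omega>. st {} \<omega> s \<in> {{..<n}}}) \<in> sets (clumsy_space n q)"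
      by (rule sets.countable_UN'') (simp_all add: st_sets[of "{}" _ "{{..<n}}", simplified])
    ultimately show ?thesis by (simp add: sets.Diff st_sets[of "{}" _ "{{..<n}}", simplified])
  next
    case infinity
    have "clumsy_T n -` {a} \<inter> space (clumsy_space n q) =
      space (clumsy_space n q) - (\<Union>s. {\<omega>. st {} \<omega> s \<in> {{..<n}}})"
      unfolding infinity by (rule set_eqI) (simp add: space_clumsy T_inf_iff)
    moreover have "(\<Union>s. {\<omega>. st {} \<omega> s \<in> {{..<n}}}) \<in> sets (clumsy_space n q)"
      by (rule sets.countable_UN'') (simp_all add: st_sets[of "{}" _ "{{..<n}}", simplified])
    ultimately show ?thesis by (simp add: sets.Diff)
  qed
qed

definition TT :: "enat \<Rightarrow> real" where
  "TT a = (case a of enat k \<Rightarrow> real k | \<infinity> \<Rightarrow> 0)"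

lemma f_meas: "(\<lambda>\<omega>. c * (case clumsy_T n \<omega> of enat k \<Rightarrow> real k | \<infinity> \<Rightarrow> 0)) \<in> borel_measurable (clumsy_space n q)"
proof -
  have "(\<lambda>a. c * TT a) \<in> measurable (count_space UNIV) borel" by simp
  from measurable_compose[OF T_meas this] show ?thesis by (simp add: TT_def o_def)
qed

context
  fixes p :: real
  assumes p0: "0 < p" and p1: "p < 1"
begin

lemma Tinf_null:
  assumes n1: "1 \<le> n"
  shows "measure (clumsy_space n (1 - p)) {\<omega>. clumsy_T n \<omega> = \<infinity>} = 0"
proof -
  interpret prob_space "clumsy_space n (1 - p)" by (rule prob_space_clumsy)
  define Y where "Y t = (1 - 1 / mm n p 0) ^ t * (mm n p 0 / mm n p (n - 1))" for t
  have m0: "mm n p 0 \<ge> 1" using mm_ge1[OF p0 p1 n1, of 0] n1 by simp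
  have Y0: "Y \<longlonglongrightarrow> 0" unfolding Y_def
  proof (intro tendsto_mult_left_zero LIMSEQ_power_zero)
    have "0 \<le> 1 - 1 / mm n p 0" "1 - 1 / mm n p 0 < 1" using m0 by auto
    then show "norm (1 - 1 / mm n p 0) < 1" by simp
  qed
  have le: "measure (clumsy_space n (1 - p)) {\<omega>. clumsy_T n \<omega> = \<infinity>} \<le> Y t" for t
  proof -
    have "{\<omega>. clumsy_T n \<omega> = \<infinity>} \<subseteq> Ev n {} t"
    proof
      fix \<omega> assume "\<omega> \<in> {\<omega>. clumsy_T n \<omega> = \<infinity>}"
      then have "enat t < clumsy_T n \<omega>" by simp
      then show "\<omega> \<in> Ev n {} t" by (simp add: T_gt_iff)
    qed
    then have "measure (clumsy_space n (1 - p)) {\<omega>. clumsy_T n \<omega> = \<infinity>} \<le> measure (clumsy_space n (1 - p)) (Ev n {} t)"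
      by (intro finite_measure_mono Ev_sets)
    also have "\<dots> \<le> Y t" using upper[OF p0 p1 n1, of "{}" t] unfolding Y_def by simp
    finally show ?thesis .
  qed
  have "measure (clumsy_space n (1 - p)) {\<omega>. clumsy_T n \<omega> = \<infinity>} \<le> 0"
    by (rule tendsto_le[OF _ Y0 tendsto_const]) (use le in simp_all)
  then show ?thesis using measure_nonneg[of "clumsy_space n (1 - p)" "{\<omega>. clumsy_T n \<omega> = \<infinity>}"] by linarith
qed

end


lemma cdf_exp: "cdf (density lborel (exponential_density 1)) x = (if 0 \<le> x then 1 - exp (- x) else 0)"
proof -
  let ?M = "density lborel (exponential_density 1)"
  interpret prob_space ?M by (rule prob_space_exponential_density) simp
  have D: "distributed ?M lborel (\<lambda>x. x) (exponential_density 1)"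
    unfolding distributed_def by (auto simp: distr_id2)
  have c: "cdf ?M y = \<P>(z in ?M. z \<le> y)" for y
    by (simp add: cdf_def2 atMost_def)
  show ?thesis
  proof (cases "0 \<le> x")
    case True
    then show ?thesis using exponential_distributedD_le[OF D True] c by simp
  next
    case False
    have "cdf ?M x \<le> cdf ?M 0"
      unfolding cdf_def2 using False by (intro finite_measure_mono) auto
    also have "\<dots> = 0" using exponential_distributedD_le[OF D, of 0] c by simp
    finally have "cdf ?M x \<le> 0" .
    moreover have "0 \<le> cdf ?M x" by (simp add: cdf_def2)
    ultimately show ?thesis using False by simp
  qed
qed


context
  fixes p :: real
  assumes p0: "0 < p" and p1: "p < 1"
begin

lemma u_lim:
  assumes x: "0 \<le> x"
  shows "(\<lambda>n. measure (clumsy_space n (1 - p)) (Ev n {} (nat \<lfloor>x / (p * (1 - p) ^ n)\<rfloor>))) \<longlonglongrightarrow> exp (- x)"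
proof -
  define c where "c n = p * (1 - p) ^ n" for n :: nat
  define t where "t n = nat \<lfloor>x / c n\<rfloor>" for n
  have c0: "c n > 0" for n unfolding c_def using p0 p1 by simp
  have c_lim: "c \<longlonglongrightarrow> 0" unfolding c_def using tendsto_mult[OF tendsto_const qn0[OF p0 p1], of p] by simp
  have L: "(\<lambda>n. (1 - 1 / mm n p (n - 1)) ^ t n) \<longlonglongrightarrow> exp (- x)"
    unfolding t_def by (rule exp_limit[OF _ c0 c_lim x]) (use mm_last_lim[OF p0 p1] in \<open>simp add: c_def\<close>)
  have U1: "(\<lambda>n. (1 - 1 / mm n p 0) ^ t n) \<longlonglongrightarrow> exp (- x)"
    unfolding t_def by (rule exp_limit[OF _ c0 c_lim x]) (use mm0_lim[OF p0 p1] in \<open>simp add: c_def\<close>)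
  have R: "(\<lambda>n. (mm n p 0 * c n) / (mm n p (n - 1) * c n)) \<longlonglongrightarrow> 1 / 1"
    unfolding c_def by (intro tendsto_divide mm0_lim mm_last_lim p0 p1) simp
  have R': "(\<lambda>n. mm n p 0 / mm n p (n - 1)) \<longlonglongrightarrow> 1"
  proof -
    have "(mm n p 0 * c n) / (mm n p (n - 1) * c n) = mm n p 0 / mm n p (n - 1)" for n
      using c0[of n] by simp
    then show ?thesis using R by simp
  qed
  have U: "(\<lambda>n. (1 - 1 / mm n p 0) ^ t n * (mm n p 0 / mm n p (n - 1))) \<longlonglongrightarrow> exp (- x) * 1"
    by (intro tendsto_mult U1 R')
  have lo: "\<forall>\<^sub>F n in sequentially. (1 - 1 / mm n p (n - 1)) ^ t n \<le> measure (clumsy_space n (1 - p)) (Ev n {} (t n))"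
    using eventually_ge_at_top[of 1]
  proof eventually_elim
    case (elim n)
    have m0: "mm n p 0 > 0" using mm_pos[OF p0 p1 elim, of 0] elim by simp
    show ?case using lower[OF p0 p1 elim, of "{}" "t n"] m0 by simp
  qed
  have up: "\<forall>\<^sub>F n in sequentially. measure (clumsy_space n (1 - p)) (Ev n {} (t n)) \<le> (1 - 1 / mm n p 0) ^ t n * (mm n p 0 / mm n p (n - 1))"
    using eventually_ge_at_top[of 1]
  proof eventually_elim
    case (elim n)
    show ?case using upper[OF p0 p1 elim, of "{}" "t n"] by simp
  qed
  have "(\<lambda>n. measure (clumsy_space n (1 - p)) (Ev n {} (t n))) \<longlonglongrightarrow> exp (- x)"
    by (rule tendsto_sandwich[OF lo up L]) (use U in simp)
  then show ?thesis unfolding t_def c_def .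
qed

lemma cdf_eq:
  fixes x :: real
  assumes n1: "1 \<le> n" and x: "0 \<le> x"
  defines "f \<equiv> \<lambda>\<omega>. p * (1 - p) ^ n * (case clumsy_T n \<omega> of enat k \<Rightarrow> real k | \<infinity> \<Rightarrow> 0)"
  shows "measure (clumsy_space n (1 - p)) {\<omega>. f \<omega> \<le> x} =
     1 - measure (clumsy_space n (1 - p)) (Ev n {} (nat \<lfloor>x / (p * (1 - p) ^ n)\<rfloor>))"
proof -
  let ?P = "clumsy_space n (1 - p)"
  interpret prob_space ?P by (rule prob_space_clumsy)
  define c where "c = p * (1 - p) ^ n"
  define t where "t = nat \<lfloor>x / c\<rfloor>"
  have c0: "c > 0" unfolding c_def using p0 p1 by simp
  let ?A = "{\<omega>. f \<omega> \<le> x}"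
  let ?E = "Ev n {} t"
  let ?N = "{\<omega>. clumsy_T n \<omega> = \<infinity>}"
  have fm: "f \<in> borel_measurable ?P" unfolding f_def by (rule f_meas)
  have Asets: "?A \<in> sets ?P"
    using measurable_sets[OF fm, of "{..x}"] by (simp add: space_clumsy vimage_def)
  have Esets: "?E \<in> sets ?P" by (rule Ev_sets)
  have Nsets: "?N \<in> sets ?P"
    using measurable_sets[OF T_meas, of "{\<infinity>}" n "1 - p"] by (simp add: space_clumsy vimage_def)
  have sub1: "space ?P - ?E \<subseteq> ?A"
  proof
    fix \<omega> assume "\<omega> \<in> space ?P - ?E"
    then have "\<not> enat t < clumsy_T n \<omega>" by (simp add: T_gt_iff)
    then obtain k where k: "clumsy_T n \<omega> = enat k" "k \<le> t"
      by (cases "clumsy_T n \<omega>") auto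
    have "real k \<le> real (nat \<lfloor>x / c\<rfloor>)" using k(2) unfolding t_def by simp
    also have "\<dots> = real_of_int \<lfloor>x / c\<rfloor>" using x c0 by simp
    also have "\<dots> \<le> x / c" by (rule of_int_floor_le)
    finally have "real k \<le> x / c" .
    then have "c * real k \<le> x" using c0 by (simp add: field_simps)
    then show "\<omega> \<in> ?A" unfolding f_def c_def using k(1) by simp
  qed
  have sub2: "?A \<subseteq> (space ?P - ?E) \<union> ?N"
  proof
    fix \<omega> assume A: "\<omega> \<in> ?A"
    show "\<omega> \<in> (space ?P - ?E) \<union> ?N"
    proof (cases "clumsy_T n \<omega>")
      case (enat k)
      then have "c * real k \<le> x" using A unfolding f_def c_def by simp
      then have "real k \<le> x / c" using c0 by (simp add: field_simps)
      then have "k \<le> t" unfolding t_def by (simp add: le_nat_floor le_floor_iff nat_le_iff)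
      then have "\<not> enat t < clumsy_T n \<omega>" using enat by simp
      then show ?thesis by (simp add: T_gt_iff space_clumsy)
    next
      case infinity then show ?thesis by simp
    qed
  qed
  have "1 - prob ?E = prob (space ?P - ?E)" using prob_compl[OF Esets] by simp
  also have "\<dots> \<le> prob ?A" using sub1 Asets by (intro finite_measure_mono)
  finally have ge: "1 - prob ?E \<le> prob ?A" .
  have "prob ?A \<le> prob ((space ?P - ?E) \<union> ?N)"
    using sub2 Esets Nsets by (intro finite_measure_mono) auto
  also have "\<dots> \<le> prob (space ?P - ?E) + prob ?N"
    using Esets Nsets by (intro measure_Un_le) auto
  also have "prob ?N = 0" by (rule Tinf_null[OF p0 p1 n1])
  also have "prob (space ?P - ?E) = 1 - prob ?E" using prob_compl[OF Esets] by simp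
  finally have le: "prob ?A \<le> 1 - prob ?E" by simp
  show ?thesis using ge le unfolding t_def c_def by simp
qed

end

theorem mainTheorem3:
  fixes p :: real
  assumes "0 < p" and "p < 1"
  shows "weak_conv_m
           (\<lambda>n. distr (clumsy_space n (1 - p)) borel
                   (\<lambda>\<omega>. p * (1 - p) ^ n * (case clumsy_T n \<omega> of enat k \<Rightarrow> real k | \<infinity> \<Rightarrow> 0)))
           (density lborel (exponential_density 1))"
  unfolding weak_conv_m_def weak_conv_def
proof (intro allI impI)
  fix x :: real
  define f where "f n = (\<lambda>\<omega>. p * (1 - p) ^ n * (case clumsy_T n \<omega> of enat k \<Rightarrow> real k | \<infinity> \<Rightarrow> 0))" for n
  have cdfn: "cdf (distr (clumsy_space n (1 - p)) borel (f n)) x = measure (clumsy_space n (1 - p)) {\<omega>. f n \<omega> \<le> x}" for n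
  proof -
    have fm: "f n \<in> borel_measurable (clumsy_space n (1 - p))" unfolding f_def by (rule f_meas)
    show ?thesis unfolding cdf_def2 using measure_distr[OF fm, of "{..x}"]
      by (simp add: space_clumsy vimage_def)
  qed
  show "(\<lambda>n. cdf (distr (clumsy_space n (1 - p)) borel
                   (\<lambda>\<omega>. p * (1 - p) ^ n * (case clumsy_T n \<omega> of enat k \<Rightarrow> real k | \<infinity> \<Rightarrow> 0))) x)
        \<longlonglongrightarrow> cdf (density lborel (exponential_density 1)) x"
  proof (cases "0 \<le> x")
    case True
    have "(\<lambda>n. 1 - measure (clumsy_space n (1 - p)) (Ev n {} (nat \<lfloor>x / (p * (1 - p) ^ n)\<rfloor>))) \<longlonglongrightarrow> 1 - exp (- x)"
      by (intro tendsto_diff tendsto_const u_lim[OF assms True])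
    moreover have "\<forall>\<^sub>F n in sequentially. 1 - measure (clumsy_space n (1 - p)) (Ev n {} (nat \<lfloor>x / (p * (1 - p) ^ n)\<rfloor>))
        = cdf (distr (clumsy_space n (1 - p)) borel (f n)) x"
      using eventually_ge_at_top[of 1]
    proof eventually_elim
      case (elim n)
      show ?case using cdfn[of n] cdf_eq[OF assms elim True] by (simp add: f_def)
    qed
    ultimately have "(\<lambda>n. cdf (distr (clumsy_space n (1 - p)) borel (f n)) x) \<longlonglongrightarrow> 1 - exp (- x)"
      by (rule Lim_transform_eventually)
    then show ?thesis using True by (simp add: cdf_exp f_def)
  next
    case False
    have "cdf (distr (clumsy_space n (1 - p)) borel (f n)) x = 0" for n
    proof -
      have "{\<omega>. f n \<omega> \<le> x} = {}"
      proof -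
        have "f n \<omega> \<ge> 0" for \<omega> unfolding f_def using assms
          by (auto split: enat.split intro!: mult_nonneg_nonneg)
        then show ?thesis using False by (metis (mono_tags, lifting) empty_Collect_eq linorder_not_le order_less_le_trans)
      qed
      then show ?thesis unfolding cdfn by simp
    qed
    then show ?thesis using False by (simp add: cdf_exp f_def)
  qed
qed

end
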